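(* For all constraint sets $C,\tilde C$ and substitutions $\sigma,\sigma_{\tilde c}$: if $C\to^{\sigma}\tilde C$ and $\sigma_{\tilde c}\vdash_{\min}\tilde C$, then $\sigma\oplus\sigma_{\tilde c}\vdash_{\min} C$.
   Context: There are two binding times $\mathsf{S}$, $\mathsf{D}$; $\mathcal{L}$ is a finite set of labels disjoint from them. A binding-time expression is a binding time or a label; a constraint is a formal pair $B_1\preceq B_2$; a constraint set is a finite set of constraints, with $\mathrm{labels}(C)=\{l\in\mathcal{L}:\exists B.\ l\preceq B\in C\text{ or }B\preceq l\in C\}$. Satisfaction $\vdash b_1\preceq b_2$ holds exactly for $\mathsf{S}\preceq\mathsf{D}$, $\mathsf{S}\preceq\mathsf{S}$, $\mathsf{D}\preceq\mathsf{D}$. A substitution is a finite partial map $\sigma:\mathcal{L}\rightharpoonup\{\mathsf{S},\mathsf{D}\}$, extended to binding-time expressions as the identity on binding times and on labels outside its domain; $\sigma(C)=\{\sigma(B_1)\preceq\sigma(B_2): B_1\preceq B_2\in C\}$. The extension $\sigma\oplus\hat\sigma$ has domain $\mathrm{dom}(\sigma)\cup\mathrm{dom}(\hat\sigma)$ and maps $l$ to $\sigma(l)$ if $l\in\mathrm{dom}(\sigma)$, else to $\hat\sigma(l)$. $\sigma\vdash C$ means: for every $B_1\preceq B_2\in C$, $\sigma(B_1),\sigma(B_2)$ are binding times and $\vdash\sigma(B_1)\preceq\sigma(B_2)$. $\sigma_c\vdash_{\min}C$ means: $\sigma_c\vdash C$, $\mathrm{dom}(\sigma_c)=\mathrm{labels}(C)$,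 and for every $\sigma\vdash C$ and $l\in\mathrm{labels}(C)$, $\vdash\sigma_c(l)\preceq\sigma(l)$. Write $[\,]$ for the empty substitution and $[l\mapsto b]$ for the substitution with domain $\{l\}$. The normalization relation $C\to^{\sigma}\tilde C$ holds if $C=C_0\uplus\{c\}$ and one of: (a) $c=\mathsf{S}\preceq\mathsf{S}$, $\sigma=[\,]$, $\tilde C=C_0$; (b) $c=\mathsf{S}\preceq\mathsf{D}$, $\sigma=[\,]$, $\tilde C=C_0$; (c) $c=\mathsf{D}\preceq\mathsf{D}$, $\sigma=[\,]$, $\tilde C=C_0$; (d) $c=l\preceq\mathsf{S}$ with $l\in\mathcal{L}$, $\sigma=[l\mapsto\mathsf{S}]$, $\tilde C=[l\mapsto\mathsf{S}](C_0)$; (e) $c=\mathsf{D}\preceq l$ with $l\in\mathcal{L}$, $\sigma=[l\mapsto\mathsf{D}]$, $\tilde C=[l\mapsto\mathsf{D}](C_0)$. *)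

theory Defs
  imports Main
begin

datatype bt = S | D

datatype 'l bte = BT bt | Lab 'l

type_synonym 'l constr = "'l bte \<times> 'l bte"   (* (B1, B2) stands for B1 \<preceq> B2 *)
type_synonym 'l cset = "'l constr set"
type_synonym 'l subst = "'l \<rightharpoonup> bt"

definition labels :: "'l cset \<Rightarrow> 'l set" where
  "labels C = {l. \<exists>B. (Lab l, B) \<in> C \<or> (B, Lab l) \<in> C}"

fun bt_le :: "bt \<Rightarrow> bt \<Rightarrow> bool" where
  "bt_le S D = True"
| "bt_le S S = True"
| "bt_le D D = True"
| "bt_le D S = False"

definition is_subst :: "'l subst \<Rightarrow> bool" where
  "is_subst \<sigma> \<longleftrightarrow> finite (dom \<sigma>)"

fun app_bte :: "'l subst \<Rightarrow> 'l bte \<Rightarrow> 'l bte" where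
  "app_bte \<sigma> (BT b) = BT b"
| "app_bte \<sigma> (Lab l) = (case \<sigma> l of Some b \<Rightarrow> BT b | None \<Rightarrow> Lab l)"

definition app_cset :: "'l subst \<Rightarrow> 'l cset \<Rightarrow> 'l cset" where
  "app_cset \<sigma> C = (\<lambda>(B1, B2). (app_bte \<sigma> B1, app_bte \<sigma> B2)) ` C"

definition ext :: "'l subst \<Rightarrow> 'l subst \<Rightarrow> 'l subst" where
  "ext \<sigma> \<sigma>' = (\<lambda>l. if l \<in> dom \<sigma> then \<sigma> l else \<sigma>' l)"

definition sat :: "'l subst \<Rightarrow> 'l cset \<Rightarrow> bool" where
  "sat \<sigma> C \<longleftrightarrow> (\<forall>(B1, B2) \<in> C. \<exists>b1 b2. app_bte \<sigma> B1 = BT b1 \<and> app_bte \<sigma> B2 = BT b2 \<and> bt_le b1 b2)"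

definition sat_min :: "'l subst \<Rightarrow> 'l cset \<Rightarrow> bool" where
  "sat_min \<sigma>c C \<longleftrightarrow> sat \<sigma>c C \<and> dom \<sigma>c = labels C \<and>
     (\<forall>\<sigma>. is_subst \<sigma> \<longrightarrow> sat \<sigma> C \<longrightarrow>
        (\<forall>l \<in> labels C. \<exists>b1 b2. \<sigma>c l = Some b1 \<and> \<sigma> l = Some b2 \<and> bt_le b1 b2))"

inductive norm_step :: "'l cset \<Rightarrow> 'l subst \<Rightarrow> 'l cset \<Rightarrow> bool" where
  SS: "(BT S, BT S) \<notin> C0 \<Longrightarrow> norm_step (insert (BT S, BT S) C0) Map.empty C0"
| SD: "(BT S, BT D) \<notin> C0 \<Longrightarrow> norm_step (insert (BT S, BT D) C0) Map.empty C0"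
| DD: "(BT D, BT D) \<notin> C0 \<Longrightarrow> norm_step (insert (BT D, BT D) C0) Map.empty C0"
| LS: "(Lab l, BT S) \<notin> C0 \<Longrightarrow>
       norm_step (insert (Lab l, BT S) C0) [l \<mapsto> S] (app_cset [l \<mapsto> S] C0)"
| DL: "(BT D, Lab l) \<notin> C0 \<Longrightarrow>
       norm_step (insert (BT D, Lab l) C0) [l \<mapsto> D] (app_cset [l \<mapsto> D] C0)"

end

theory Submission
  imports Defs
begin

lemma app_ext: "app_bte (ext \<sigma> \<tau>) B = app_bte \<tau> (app_bte \<sigma> B)"
  by (cases B) (auto simp: ext_def split: option.splits)

lemma app_fix: "\<sigma>' l = Some b \<Longrightarrow> app_bte \<sigma>' (app_bte [l \<mapsto> b] B) = app_bte \<sigma>' B"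
  by (cases B) (auto split: option.splits)

lemma app_lab: "app_bte [l \<mapsto> b] B = Lab x \<longleftrightarrow> B = Lab x \<and> x \<noteq> l"
  by (cases B) auto

lemma labels_app: "labels (app_cset [l \<mapsto> b] C0) = labels C0 - {l}"
proof
  show "labels (app_cset [l \<mapsto> b] C0) \<subseteq> labels C0 - {l}"
  proof
    fix x assume "x \<in> labels (app_cset [l \<mapsto> b] C0)"
    then obtain B1 B2 where p: "(B1,B2) \<in> C0" and
      "app_bte [l \<mapsto> b] B1 = Lab x \<or> app_bte [l \<mapsto> b] B2 = Lab x"
      unfolding labels_def app_cset_def by auto
    then show "x \<in> labels C0 - {l}" unfolding app_lab labels_def by auto
  qed
  show "labels C0 - {l} \<subseteq> labels (app_cset [l \<mapsto> b] C0)"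
  proof
    fix x assume "x \<in> labels C0 - {l}"
    then obtain B where "x \<noteq> l" "(Lab x, B) \<in> C0 \<or> (B, Lab x) \<in> C0" unfolding labels_def by auto
    then have "(Lab x, app_bte [l \<mapsto> b] B) \<in> app_cset [l \<mapsto> b] C0 \<or> (app_bte [l \<mapsto> b] B, Lab x) \<in> app_cset [l \<mapsto> b] C0"
      unfolding app_cset_def by (force simp: image_iff)
    then show "x \<in> labels (app_cset [l \<mapsto> b] C0)" unfolding labels_def by blast
  qed
qed

lemma sat_app: "sat \<sigma> (app_cset \<tau> C) \<longleftrightarrow> (\<forall>(B1,B2)\<in>C. \<exists>b1 b2. app_bte \<sigma> (app_bte \<tau> B1) = BT b1 \<and> app_bte \<sigma> (app_bte \<tau> B2) = BT b2 \<and> bt_le b1 b2)"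
  unfolding sat_def app_cset_def by auto

lemma labels_insert_BT: "labels (insert (BT a, BT b) C) = labels C"
  unfolding labels_def by auto

lemma labels_insert_L1: "labels (insert (Lab l, BT b) C) = insert l (labels C)"
  unfolding labels_def by auto

lemma labels_insert_L2: "labels (insert (BT b, Lab l) C) = insert l (labels C)"
  unfolding labels_def by auto

lemma ext_empty: "ext Map.empty \<tau> = \<tau>"
  unfolding ext_def by auto

lemma bt_case: "\<sigma> = Map.empty \<Longrightarrow> bt_le a b \<Longrightarrow> sat_min \<tau> C \<Longrightarrow> sat_min (ext \<sigma> \<tau>) (insert (BT a, BT b) C)"
proof -
  assume e: "\<sigma> = Map.empty" and le: "bt_le a b" and m: "sat_min \<tau> C"
  have "sat \<tau> (insert (BT a, BT b) C)" using m le unfolding sat_min_def sat_def by auto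
  then show ?thesis using m unfolding e ext_empty sat_min_def labels_insert_BT
    by (auto simp: sat_def)
qed

lemma lab_case:
  assumes m: "sat_min \<tau> (app_cset [l \<mapsto> b] C0)"
    and ord: "(B = (Lab l, BT S) \<and> b = S) \<or> (B = (BT D, Lab l) \<and> b = D)"
  shows "sat_min (ext [l \<mapsto> b] \<tau>) (insert B C0)"
proof -
  have s: "sat \<tau> (app_cset [l \<mapsto> b] C0)"
    using m unfolding sat_min_def by blast
  have d: "dom \<tau> = labels C0 - {l}"
    using m unfolding sat_min_def labels_app by blast
  have mn: "\<And>\<sigma>. is_subst \<sigma> \<Longrightarrow> sat \<sigma> (app_cset [l \<mapsto> b] C0) \<Longrightarrow>
        (\<forall>l' \<in> labels C0 - {l}. \<exists>b1 b2. \<tau> l' = Some b1 \<and> \<sigma> l' = Some b2 \<and> bt_le b1 b2)"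
    using m unfolding sat_min_def labels_app by blast
  have lab: "labels (insert B C0) = insert l (labels C0)"
    using ord labels_insert_L1 labels_insert_L2 by metis
  have e_l: "ext [l \<mapsto> b] \<tau> l = Some b" by (simp add: ext_def)
  have sat1: "sat (ext [l \<mapsto> b] \<tau>) (insert B C0)"
    using s ord unfolding sat_def app_cset_def
    by (auto simp: app_ext split: prod.splits)
  have dom1: "dom (ext [l \<mapsto> b] \<tau>) = labels (insert B C0)"
    proof -
    have "dom (ext [l \<mapsto> b] \<tau>) = insert l (dom \<tau>)" unfolding ext_def dom_def by auto
    then show ?thesis using d lab by auto
  qed
  have min1: "\<forall>\<sigma>. is_subst \<sigma> \<longrightarrow> sat \<sigma> (insert B C0) \<longrightarrow>
        (\<forall>l' \<in> labels (insert B C0). \<exists>b1 b2. ext [l \<mapsto> b] \<tau> l' = Some b1 \<and> \<sigma> l' = Some b2 \<and> bt_le b1 b2)"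
  proof (intro allI impI ballI)
    fix \<sigma> l' assume iss: "is_subst \<sigma>" and sa: "sat \<sigma> (insert B C0)" and l': "l' \<in> labels (insert B C0)"
    have sl: "\<sigma> l = Some b"
    proof -
      from sa have "\<exists>b1 b2. app_bte \<sigma> (fst B) = BT b1 \<and> app_bte \<sigma> (snd B) = BT b2 \<and> bt_le b1 b2"
        unfolding sat_def by (cases B) auto
      then show ?thesis using ord
        apply (auto split: option.splits)
        subgoal for x by (cases x) auto
        subgoal for x by (cases x) auto
        done
    qed
    have "sat \<sigma> (app_cset [l \<mapsto> b] C0)"
      unfolding sat_app using sa unfolding sat_def by (auto simp: app_fix[of \<sigma> l b, OF sl])
    note mm = mn[OF iss this]
    show "\<exists>b1 b2. ext [l \<mapsto> b] \<tau> l' = Some b1 \<and> \<sigma> l' = Some b2 \<and> bt_le b1 b2"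
    proof (cases "l' = l")
      case True
      then show ?thesis using sl e_l by (cases b) auto
    next
      case False
      then have "l' \<in> labels C0 - {l}" using l' lab by auto
      then show ?thesis using mm False by (auto simp: ext_def)
    qed
  qed
  show ?thesis unfolding sat_min_def using sat1 dom1 min1 by blast
qed

theorem lemma10:
  fixes C Ct :: "'l cset" and \<sigma> \<sigma>ct :: "'l subst"
  assumes "finite C" and "finite Ct"
    and "is_subst \<sigma>" and "is_subst \<sigma>ct"
    and "norm_step C \<sigma> Ct"
    and "sat_min \<sigma>ct Ct"
  shows "sat_min (ext \<sigma> \<sigma>ct) C"
  using assms(5)
proof (cases rule: norm_step.cases)
  case SS then show ?thesis using assms(6) bt_case[of \<sigma> S S \<sigma>ct Ct] by simp
next
  case SD then show ?thesis using assms(6) bt_case[of \<sigma> S D \<sigma>ct Ct] by simp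
next
  case DD then show ?thesis using assms(6) bt_case[of \<sigma> D D \<sigma>ct Ct] by simp
next
  case (LS l C0)
  have "sat_min (ext [l \<mapsto> S] \<sigma>ct) (insert (Lab l, BT S) C0)"
    by (rule lab_case) (use LS assms(6) in auto)
  then show ?thesis using LS by simp
next
  case (DL l C0)
  have "sat_min (ext [l \<mapsto> D] \<sigma>ct) (insert (BT D, Lab l) C0)"
    by (rule lab_case) (use DL assms(6) in auto)
  then show ?thesis using DL by simp
qed

end
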